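(* Let $m\ge3$, let $\lambda$ be a $\mathbb{Z}_2$-characteristic map over $P_m$, and let $(p,S)$ and $(q,T)$ be e-sets compatible with $\lambda$ with $S\ne\varnothing$, $T\ne\varnothing$ and $\lambda(p)\ne\lambda(q)$. Then the edges $\{\lambda,\operatorname{inv}_S\lambda,p\}$ and $\{\lambda,\operatorname{inv}_T\lambda,q\}$ span a realizable square (i.e. there is a $\mathbb{Z}_2$-characteristic map $\Lambda$ over $\mathrm{wed}_{p,q}P_m$ with $\operatorname{proj}_{\{p_2,q_2\}}\Lambda\simeq\lambda$, $\operatorname{proj}_{\{p_1,q_2\}}\Lambda\simeq\operatorname{inv}_S\lambda$, $\operatorname{proj}_{\{p_2,q_1\}}\Lambda\simeq\operatorname{inv}_T\lambda$) if and only if $\Omega_q(S)\cap\Omega_p(T)=\varnothing$.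
   Context: $P_m$: simplicial complex on $[m]$ with facets $\{i,i+1\}$ mod $m$. A $\mathbb{Z}_2$-characteristic map over $P_m$ is a map $\lambda\colon[m]\to\{\mathbf a,\mathbf b,\mathbf c\}=\mathbb{Z}_2^2\setminus\{0\}$ with $\lambda(i)\ne\lambda(i+1)$ mod $m$; $\simeq$ denotes D-J equivalence (composition with $GL(n,\mathbb{Z}_2)$). $\operatorname{supp}_\lambda p=\lambda^{-1}(\lambda(p))$. An e-set compatible with $\lambda$ is a pair $(p,S)$ with $p\in[m]$, $S\subseteq\operatorname{supp}_\lambda p$, $|S|$ even. For nonempty such $S$ (necessarily a non-consecutive set, $|S|\ge2$), the points of $S$ cut the cycle $[m]$ into $|S|$ nonempty arcs (maximal cyclic intervals of $[m]\setminus S$), which are colored alternately black and white. $\operatorname{inv}_S\lambda$ is obtained from $\lambda$ by exchanging, on every vertex of the black arcs, the two values different from $\lambda(p)$; it is well defined up to D-J equivalence (independent of the coloring); $\operatorname{inv}_\varnothing\lambda=\lambda$. For $r\in[m]\setminus S$, $\Omega_r(S)=A\cup S$ where $A$ is the union of the black arcs for the coloring in which the arc containing $r$ is white. Wedges: $\mathrm{wed}_{p,q}P_m$ has vertices $p_1,p_2,q_1,q_2$ replacing $p,q$, minimal non-faces obtained from those of $P_m$ by replacing $p$ by $p_1,p_2$ and $q$ by $q_1,q_2$ when they occur. Characteristic maps over it take values in $\mathbb{Z}_2^{m}$ (dimension $m$ complex $-1$... i.e. $\mathbb{Z}_2^4$) with faces mapped to linearly independent sets; $\operatorname{proj}_\sigma\Lambda(w)=[\Lambda(w)]$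 modulo $\langle\Lambda(v):v\in\sigma\rangle$ on the link of $\sigma$, and the link of $\{p_i,q_j\}$ is identified with $P_m$ via $p_{3-i}\mapsto p$, $q_{3-j}\mapsto q$. *)

theory Defs
  imports "HOL-Analysis.Analysis" "HOL-Library.Z2" "HOL-Library.Numeral_Type"
begin

text \<open>Conventions. The vertex set [m] is rendered as {0..<m}; the cycle P_m has facets
  {i, (i+1) mod m}. Z_2 is the field bit (HOL-Library.Z2); Z_2^n is bit^n.\<close>

definition pm_face :: "nat \<Rightarrow> nat set \<Rightarrow> bool" where
  "pm_face m \<sigma> \<longleftrightarrow> \<sigma> \<subseteq> {0..<m} \<and> (\<exists>i<m. \<sigma> \<subseteq> {i, Suc i mod m})"

definition pm_min_nonface :: "nat \<Rightarrow> nat set \<Rightarrow> bool" where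
  "pm_min_nonface m N \<longleftrightarrow> N \<subseteq> {0..<m} \<and> \<not> pm_face m N \<and> (\<forall>x\<in>N. pm_face m (N - {x}))"

definition z2_char_map :: "nat \<Rightarrow> (nat \<Rightarrow> bit^2) \<Rightarrow> bool" where
  "z2_char_map m lam \<longleftrightarrow> (\<forall>i<m. lam i \<noteq> 0 \<and> lam i \<noteq> lam (Suc i mod m))"

definition dj_equiv :: "nat \<Rightarrow> (nat \<Rightarrow> bit^2) \<Rightarrow> (nat \<Rightarrow> bit^2) \<Rightarrow> bool" where
  "dj_equiv m lam lam' \<longleftrightarrow> (\<exists>A :: bit^2^2. invertible A \<and> (\<forall>i<m. lam' i = A *v lam i))"

definition supp :: "nat \<Rightarrow> (nat \<Rightarrow> bit^2) \<Rightarrow> nat \<Rightarrow> nat set" where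
  "supp m lam p = {i\<in>{0..<m}. lam i = lam p}"

definition eset :: "nat \<Rightarrow> (nat \<Rightarrow> bit^2) \<Rightarrow> nat \<Rightarrow> nat set \<Rightarrow> bool" where
  "eset m lam p S \<longleftrightarrow> p < m \<and> S \<subseteq> supp m lam p \<and> even (card S)"

text \<open>Alternating colouring of the arcs cut out by S: a vertex x not in S is coloured by
  the parity of the number of points of S below x. Since |S| is even, the arc wrapping
  around through m-1 and 0 gets a single colour, and consecutive arcs get opposite colours
  (S being non-consecutive). Colour True = black.\<close>
definition arc_col :: "nat set \<Rightarrow> nat \<Rightarrow> bool" where
  "arc_col S x = odd (card {s\<in>S. s < x})"

text \<open>inv_S lam: on black arcs exchange the two values different from lam p
  (x \<mapsto> x + lam p on nonzero x \<noteq> lam p).\<close>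
definition inv_set :: "nat \<Rightarrow> (nat \<Rightarrow> bit^2) \<Rightarrow> nat \<Rightarrow> nat set \<Rightarrow> nat \<Rightarrow> bit^2" where
  "inv_set m lam p S x =
     (if x \<in> {0..<m} - S \<and> arc_col S x \<and> lam x \<noteq> lam p then lam x + lam p else lam x)"

text \<open>Omega_r(S): S together with the black arcs for the colouring in which the arc
  containing r is white, i.e. the vertices outside S whose arc has colour different
  from that of r.\<close>
definition Omega :: "nat \<Rightarrow> nat \<Rightarrow> nat set \<Rightarrow> nat set" where
  "Omega m r S = S \<union> {x\<in>{0..<m} - S. arc_col S x \<noteq> arc_col S r}"

datatype wvert = Old nat | P1 | P2 | Q1 | Q2

definition wed_vertices :: "nat \<Rightarrow> nat \<Rightarrow> nat \<Rightarrow> wvert set" where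
  "wed_vertices m p q = Old ` ({0..<m} - {p, q}) \<union> {P1, P2, Q1, Q2}"

definition wed_set :: "nat \<Rightarrow> nat \<Rightarrow> nat set \<Rightarrow> wvert set" where
  "wed_set p q N = Old ` (N - {p, q}) \<union> (if p \<in> N then {P1, P2} else {})
                    \<union> (if q \<in> N then {Q1, Q2} else {})"

text \<open>Faces of wed_{p,q} P_m: vertex sets containing no minimal non-face, where the
  minimal non-faces are the images under wed_set of the minimal non-faces of P_m.\<close>
definition wed_face :: "nat \<Rightarrow> nat \<Rightarrow> nat \<Rightarrow> wvert set \<Rightarrow> bool" where
  "wed_face m p q \<tau> \<longleftrightarrow> \<tau> \<subseteq> wed_vertices m p q \<and>
     \<not> (\<exists>N. pm_min_nonface m N \<and> wed_set p q N \<subseteq> \<tau>)"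

definition wed_char_map :: "nat \<Rightarrow> nat \<Rightarrow> nat \<Rightarrow> (wvert \<Rightarrow> bit^4) \<Rightarrow> bool" where
  "wed_char_map m p q Lam \<longleftrightarrow>
     (\<forall>\<tau>. wed_face m p q \<tau> \<longrightarrow> inj_on Lam \<tau> \<and> vec.independent (Lam ` \<tau>))"

text \<open>Identification of P_m with the link of {p_i,q_j}: p \<mapsto> vp (= p_{3-i}),
  q \<mapsto> vq (= q_{3-j}), other vertices unchanged.\<close>
definition wemb :: "nat \<Rightarrow> nat \<Rightarrow> wvert \<Rightarrow> wvert \<Rightarrow> nat \<Rightarrow> wvert" where
  "wemb p q vp vq i = (if i = p then vp else if i = q then vq else Old i)"

text \<open>proj_sigma Lam \<simeq> lam, where proj_sigma Lam takes values in the 2-dimensional quotient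
  Z_2^4 / span(Lam sigma). Up to D-J equivalence, identifying the quotient with Z_2^2 amounts
  to a linear map M : Z_2^4 \<rightarrow> Z_2^2 with kernel exactly span(Lam sigma); then
  proj_sigma Lam \<simeq> lam iff M (Lam (e i)) = lam i for all vertices i of the link.\<close>
definition proj_dj_equiv ::
  "nat \<Rightarrow> (wvert \<Rightarrow> bit^4) \<Rightarrow> wvert set \<Rightarrow> (nat \<Rightarrow> wvert) \<Rightarrow> (nat \<Rightarrow> bit^2) \<Rightarrow> bool" where
  "proj_dj_equiv m Lam \<sigma> e lam \<longleftrightarrow>
     (\<exists>M :: bit^4^2. {x. M *v x = 0} = vec.span (Lam ` \<sigma>) \<and> (\<forall>i<m. M *v Lam (e i) = lam i))"

definition realizable_square ::
  "nat \<Rightarrow> nat \<Rightarrow> nat \<Rightarrow> (nat \<Rightarrow> bit^2) \<Rightarrow> (nat \<Rightarrow> bit^2) \<Rightarrow> (nat \<Rightarrow> bit^2) \<Rightarrow> bool" where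
  "realizable_square m p q lam lam1 lam2 \<longleftrightarrow>
     (\<exists>Lam. wed_char_map m p q Lam
        \<and> proj_dj_equiv m Lam {P2, Q2} (wemb p q P1 Q1) lam
        \<and> proj_dj_equiv m Lam {P1, Q2} (wemb p q P2 Q1) lam1
        \<and> proj_dj_equiv m Lam {P2, Q1} (wemb p q P1 Q2) lam2)"

end

theory Submission
  imports Defs
begin


lemma bit_cases2: "(x::bit) = 0 \<or> x = 1" by (metis bit_not_zero_iff)

lemma vadd_self[simp]: "(x::bit^'n) + x = 0"
  by (simp add: vec_eq_iff)

lemma vadd_self2[simp]: "(x::bit^'n) + (x + y) = y"
  by (simp add: vec_eq_iff)

lemma not_in_span_functional:
  fixes f :: "'a::field^'n \<Rightarrow> 'a"
  assumes add: "\<And>x y. f (x + y) = f x + f y" and sc: "\<And>c x. f (c *s x) = c * f x"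
    and z: "\<forall>s\<in>S. f s = 0" and w: "f w \<noteq> 0"
  shows "w \<notin> vec.span S"
proof
  assume "w \<in> vec.span S"
  moreover have "vec.span S \<subseteq> {x. f x = 0}"
  proof (rule vec.span_minimal)
    show "S \<subseteq> {x. f x = 0}" using z by auto
    show "vec.subspace {x. f x = 0}"
      unfolding vec.subspace_def using add sc
      by (auto, metis mult_zero_left sc vector_smult_lzero)
  qed
  ultimately show False using w by auto
qed

lemma indep_axis: "vec.independent ((\<lambda>l. axis l (1::'a::field)) ` L)"
  by (rule vec.independent_mono[OF independent_cart_basis]) (auto simp: cart_basis_def)

lemma notin_span1:
  fixes u :: "'a::field^'n"
  assumes "u $ k \<noteq> 0" "k \<notin> L"
  shows "u \<notin> vec.span ((\<lambda>l. axis l 1) ` L)"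
  by (rule not_in_span_functional[where f="\<lambda>x. x $ k"]) (use assms in \<open>auto simp: axis_def\<close>)

lemma indep_ins1:
  fixes u :: "'a::field^'n"
  assumes "u $ k \<noteq> 0" "k \<notin> L"
  shows "vec.independent (insert u ((\<lambda>l. axis l 1) ` L)) \<and> u \<notin> (\<lambda>l. axis l 1) ` L"
  using notin_span1[OF assms] indep_axis[of L] vec.independent_insertI vec.span_base by metis

lemma indep_ins2:
  fixes u w :: "'a::field^'n"
  assumes det: "u $ k1 * w $ k2 \<noteq> u $ k2 * w $ k1" and k: "k1 \<notin> L" "k2 \<notin> L"
  shows "vec.independent (insert w (insert u ((\<lambda>l. axis l 1) ` L)))
     \<and> u \<notin> (\<lambda>l. axis l 1) ` L \<and> w \<notin> insert u ((\<lambda>l. axis l 1) ` L)"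
proof -
  have "u $ k1 \<noteq> 0 \<or> u $ k2 \<noteq> 0" using det by auto
  then have u: "u \<notin> vec.span ((\<lambda>l. axis l 1) ` L)"
    using notin_span1 k by blast
  have w: "w \<notin> vec.span (insert u ((\<lambda>l. axis l 1) ` L))"
  proof (rule not_in_span_functional[where f="\<lambda>x. x $ k1 * u $ k2 - x $ k2 * u $ k1"])
    show "\<forall>s\<in>insert u ((\<lambda>l. axis l 1) ` L). s $ k1 * u $ k2 - s $ k2 * u $ k1 = 0"
      using k by (auto simp: axis_def)
    show "w $ k1 * u $ k2 - w $ k2 * u $ k1 \<noteq> 0" using det by (simp add: algebra_simps)
  qed (simp_all add: algebra_simps)
  have i: "vec.independent (insert u ((\<lambda>l. axis l 1) ` L))"
    using u indep_axis vec.independent_insertI by blast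
  have 1: "vec.independent (insert w (insert u ((\<lambda>l. axis l 1) ` L)))"
    by (rule vec.independent_insertI[OF w i])
  have 2: "u \<notin> (\<lambda>l. axis l 1) ` L" using u vec.span_base by metis
  have 3: "w \<notin> insert u ((\<lambda>l. axis l 1) ` L)" using w vec.span_base by metis
  show ?thesis using 1 2 3 by simp
qed



lemma bit2_eq: "(v::bit^2) = w \<longleftrightarrow> v$1 = w$1 \<and> v$2 = w$2"
  by (simp add: vec_eq_iff forall_2)

instance bit :: finite
proof
  have "(UNIV::bit set) = {0,1}" using bit_cases2 by auto
  then show "finite (UNIV::bit set)" by (metis finite.emptyI finite.insertI)
qed

lemma card_bit: "CARD(bit) = 2"
proof -
  have u: "(UNIV::bit set) = {0,1}" using bit_cases2 by auto
  have "card {0::bit,1} = 2" by simp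
  then show ?thesis by (simp only: u)
qed

lemma bit2_three:
  fixes x a b :: "bit^2"
  assumes "a \<noteq> 0" "b \<noteq> 0" "a \<noteq> b" "x \<noteq> 0"
  shows "x = a \<or> x = b \<or> x = a + b"
proof (rule ccontr)
  assume n: "\<not> ?thesis"
  have ab: "a + b \<noteq> a" "a + b \<noteq> b" "a + b \<noteq> 0"
    using assms(1,2) apply simp_all
    using assms(3) by (metis add_diff_cancel_right' diff_zero vadd_self)
  have "card {0, a, b, a+b, x} = 5" using assms n ab by auto
  moreover have "card {0, a, b, a+b, x} \<le> CARD(bit^2)" by (rule card_mono) auto
  ultimately show False by (simp add: card_bit)
qed

lemma bit2_sum_ne: "(a::bit^2) \<noteq> b \<Longrightarrow> a + b \<noteq> 0"
  by (metis add_diff_cancel_right' diff_zero vadd_self)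

definition mkM :: "'n \<Rightarrow> 'n \<Rightarrow> 'a::field^'m \<Rightarrow> 'a^'m \<Rightarrow> 'a^'n^'m" where
  "mkM k1 k2 \<alpha> \<beta> = (\<chi> r c. (if c = k1 then \<alpha>$r else 0) + (if c = k2 then \<beta>$r else 0))"

lemma mkM_mult: "k1 \<noteq> k2 \<Longrightarrow> mkM k1 k2 \<alpha> \<beta> *v x = x$k1 *s \<alpha> + x$k2 *s \<beta>"
proof -
  assume "k1 \<noteq> k2"
  have "(\<Sum>c\<in>UNIV. ((if c = k1 then \<alpha>$r else 0) + (if c = k2 then \<beta>$r else 0)) * x$c)
     = (\<Sum>c\<in>UNIV. (if c = k1 then \<alpha>$r * x$c else 0)) + (\<Sum>c\<in>UNIV. (if c = k2 then \<beta>$r * x$c else 0))" for r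
    by (simp add: sum.distrib distrib_right if_distrib[where f="\<lambda>z. z * _"] cong: if_cong)
  also have "... r = x$k1 * \<alpha>$r + x$k2 * \<beta>$r" for r by (simp add: mult.commute)
  finally have e: "(\<Sum>c\<in>UNIV. ((if c = k1 then \<alpha>$r else 0) + (if c = k2 then \<beta>$r else 0)) * x$c)
     = x$k1 * \<alpha>$r + x$k2 * \<beta>$r" for r .
  have "(mkM k1 k2 \<alpha> \<beta> *v x) $ r = (x$k1 *s \<alpha> + x$k2 *s \<beta>) $ r" for r
    unfolding matrix_vector_mult_def mkM_def vec_lambda_beta e by simp
  then show ?thesis by (simp only: vec_eq_iff) blast
qed



lemma span_two_axis:
  fixes k1 k2 l1 l2 :: "'n::finite"
  assumes cov: "\<And>j. j = k1 \<or> j = k2 \<or> j = l1 \<or> j = l2"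
    and d: "l1 \<noteq> k1" "l1 \<noteq> k2" "l2 \<noteq> k1" "l2 \<noteq> k2" "l1 \<noteq> l2"
  shows "vec.span {axis l1 (1::'a::field), axis l2 1} = {x. x$k1 = 0 \<and> x$k2 = 0}"
proof
  show "vec.span {axis l1 1, axis l2 1} \<subseteq> {x. x$k1 = 0 \<and> x$k2 = 0}"
    by (rule vec.span_minimal) (use d in \<open>auto simp: vec.subspace_def axis_def\<close>)
  show "{x. x$k1 = 0 \<and> x$k2 = 0} \<subseteq> vec.span {axis l1 (1::'a), axis l2 1}"
  proof
    fix x :: "'a^'n" assume x: "x \<in> {x. x$k1 = 0 \<and> x$k2 = 0}"
    have "x = x$l1 *s axis l1 1 + x$l2 *s axis l2 1"
    proof (subst vec_eq_iff, rule allI)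
      fix j show "x $ j = (x$l1 *s axis l1 1 + x$l2 *s axis l2 1) $ j"
        using cov[of j] x d by (auto simp: axis_def)
    qed
    also have "... \<in> vec.span {axis l1 1, axis l2 1}"
      by (intro vec.span_add vec.span_scale vec.span_base) auto
    finally show "x \<in> vec.span {axis l1 1, axis l2 1}" .
  qed
qed

lemma bit_combo_zero:
  fixes \<alpha> \<beta> :: "bit^2"
  assumes "\<alpha> \<noteq> 0" "\<beta> \<noteq> 0" "\<alpha> \<noteq> \<beta>"
  shows "s *s \<alpha> + t *s \<beta> = 0 \<longleftrightarrow> s = 0 \<and> t = 0"
  using bit_cases2[of s] bit_cases2[of t] assms bit2_sum_ne[of \<alpha> \<beta>] by auto

lemma ker_mkM:
  fixes k1 k2 l1 l2 :: "'n::finite" and \<alpha> \<beta> :: "bit^2"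
  assumes cov: "\<And>j. j = k1 \<or> j = k2 \<or> j = l1 \<or> j = l2"
    and d: "l1 \<noteq> k1" "l1 \<noteq> k2" "l2 \<noteq> k1" "l2 \<noteq> k2" "l1 \<noteq> l2" "k1 \<noteq> k2"
    and ab: "\<alpha> \<noteq> 0" "\<beta> \<noteq> 0" "\<alpha> \<noteq> \<beta>"
  shows "{x. mkM k1 k2 \<alpha> \<beta> *v x = 0} = vec.span {axis l1 1, axis l2 1}"
  unfolding span_two_axis[OF cov d(1-5)] mkM_mult[OF d(6)] bit_combo_zero[OF ab] ..



lemma col_next:
  assumes S: "S \<subseteq> {0..<m}" "even (card S)" and i: "i < m"
  shows "arc_col S (Suc i mod m) = (arc_col S i \<noteq> (i \<in> S))"
proof (cases "Suc i < m")
  case True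
  have fin: "finite {s\<in>S. s < i}" by auto
  have e: "{s\<in>S. s < Suc i} = {s\<in>S. s < i} \<union> (if i \<in> S then {i} else {})" using less_Suc_eq by auto
  have "card {s\<in>S. s < Suc i} = card {s\<in>S. s < i} + (if i \<in> S then 1 else 0)"
    by (subst e) (auto simp: card_insert_if fin)
  then show ?thesis using True unfolding arc_col_def by auto
next
  case False
  then have im: "Suc i = m" using i by simp
  have fin: "finite {s\<in>S. s < i}" by auto
  have e: "S = {s\<in>S. s < i} \<union> (if i \<in> S then {i} else {})" using S im
    by (auto, metis atLeastLessThan_iff less_Suc_eq subsetD)
  have "card S = card {s\<in>S. s < i} + (if i \<in> S then 1 else 0)"
    by (subst e) (auto simp: card_insert_if fin)
  then show ?thesis using S(2) im unfolding arc_col_def by auto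
qed

definition adj :: "nat \<Rightarrow> nat \<Rightarrow> nat \<Rightarrow> bool" where
  "adj m x y \<longleftrightarrow> y = Suc x mod m \<or> x = Suc y mod m"

lemma same_col:
  assumes S: "S \<subseteq> {0..<m}" "even (card S)" and xy: "x < m" "y < m" "adj m x y"
    and n: "x \<notin> S" "y \<notin> S"
  shows "arc_col S x = arc_col S y"
  using xy(3) col_next[OF S xy(1)] col_next[OF S xy(2)] n unfolding adj_def by auto

lemma pred_ex: "z < m \<Longrightarrow> \<exists>w<m. Suc w mod m = z"
proof -
  assume z: "z < m"
  show ?thesis
  proof (cases z)
    case 0 then show ?thesis using z by (intro exI[of _ "m - 1"]) auto
  next
    case (Suc w) then show ?thesis using z by (intro exI[of _ w]) auto
  qed
qed



definition conf :: "nat \<Rightarrow> (nat \<Rightarrow> bit^2) \<Rightarrow> nat \<Rightarrow> nat \<Rightarrow> nat set \<Rightarrow> nat set \<Rightarrow> bool" where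
  "conf m lam p q S T \<longleftrightarrow> z2_char_map m lam \<and> eset m lam p S \<and> eset m lam q T \<and> lam p \<noteq> lam q"

lemma conf_sym: "conf m lam p q S T \<Longrightarrow> conf m lam q p T S"
  unfolding conf_def by auto

context
  fixes m lam p q S T
  assumes cf: "conf m lam p q S T"
begin

lemma cf_p: "p < m" and cf_q: "q < m" and cf_S: "S \<subseteq> {0..<m}" and cf_Se: "even (card S)"
  and cf_Sl: "\<And>s. s \<in> S \<Longrightarrow> lam s = lam p" and cf_pq: "lam p \<noteq> lam q"
  and cf_cm: "z2_char_map m lam"
  using cf unfolding conf_def eset_def supp_def by (auto simp: subset_iff)

lemma cf_qS: "q \<notin> S" using cf_Sl cf_pq by metis

lemma cf_Om: "x < m \<Longrightarrow> x \<in> Omega m q S \<longleftrightarrow> x \<in> S \<or> (x \<notin> S \<and> arc_col S x \<noteq> arc_col S q)"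
  unfolding Omega_def by auto

lemma cf_Om_lt: "x \<in> Omega m q S \<Longrightarrow> x < m"
  unfolding Omega_def using cf_S by auto

lemma cf_qOm: "q \<notin> Omega m q S"
  using cf_Om[OF cf_q] cf_qS by auto

lemma cf_nz: "i < m \<Longrightarrow> lam i \<noteq> 0"
  using cf_cm unfolding z2_char_map_def by auto

lemma cf_adj: "x < m \<Longrightarrow> y < m \<Longrightarrow> adj m x y \<Longrightarrow> lam x \<noteq> lam y"
  using cf_cm unfolding z2_char_map_def adj_def by metis

lemma cf_three: "i < m \<Longrightarrow> lam i = lam p \<or> lam i = lam q \<or> lam i = lam p + lam q"
  using bit2_three cf_nz cf_p cf_q cf_pq by blast

lemma adj_Om_eq:
  assumes "x < m" "y < m" "adj m x y" "lam x \<noteq> lam p" "lam y \<noteq> lam p"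
  shows "x \<in> Omega m q S \<longleftrightarrow> y \<in> Omega m q S"
proof -
  have "x \<notin> S" "y \<notin> S" using assms cf_Sl by auto
  then show ?thesis using same_col[OF cf_S cf_Se assms(1-3)] cf_Om assms(1,2) by auto
qed

lemma adj_q_notOm:
  assumes "x < m" "adj m x q" "lam x \<noteq> lam p"
  shows "x \<notin> Omega m q S"
proof -
  have "x \<notin> S" using assms cf_Sl by auto
  then show ?thesis using same_col[OF cf_S cf_Se assms(1) cf_q assms(2)] cf_qS cf_Om assms(1) by auto
qed

lemma ab_pair:
  assumes "x < m" "y < m" "adj m x y" "lam x = lam p" "lam y \<noteq> lam p" "y \<in> Omega m q S"
  shows "x \<in> Omega m q S"
proof (cases "x \<in> S")
  case True then show ?thesis unfolding Omega_def by auto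
next
  case False
  have "y \<notin> S" using assms cf_Sl by auto
  then show ?thesis using same_col[OF cf_S cf_Se assms(1-3)] False cf_Om assms by auto
qed

lemma inv_self: "lam y = lam p \<Longrightarrow> inv_set m lam p S y = lam y"
  unfolding inv_set_def by auto

lemma inv_q: "inv_set m lam p S q = (if arc_col S q then lam q + lam p else lam q)"
  unfolding inv_set_def using cf_q cf_qS cf_pq by auto

lemma inv_sum:
  assumes "y < m" "y \<in> Omega m q S" "lam y \<noteq> lam p"
  shows "inv_set m lam p S y + inv_set m lam p S q = lam y + lam q + lam p"
proof -
  have yS: "y \<notin> S" using assms cf_Sl by auto
  then have c: "arc_col S y \<noteq> arc_col S q" using assms cf_Om by auto
  have iy: "inv_set m lam p S y = (if arc_col S y then lam y + lam p else lam y)"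
    unfolding inv_set_def using assms yS by auto
  show ?thesis unfolding iy inv_q using c
    by (cases "arc_col S y"; simp add: add_ac)
qed

lemma inv_val:
  assumes i: "i < m"
  shows "of_bool ((lam i \<noteq> lam q) \<noteq> (lam i \<noteq> lam p \<and> i \<in> Omega m q S)) *s lam p
     + of_bool (lam i \<noteq> lam p) *s inv_set m lam p S q = inv_set m lam p S i"
proof -
  consider "lam i = lam p" | "lam i = lam q" | "lam i = lam p + lam q" using cf_three[OF i] by blast
  then show ?thesis
  proof cases
    case 1 then show ?thesis using inv_self[OF 1] cf_pq by simp
  next
    case 2
    then have iS: "i \<notin> S" using cf_Sl cf_pq by metis
    have iv: "inv_set m lam p S i = (if arc_col S i then lam i + lam p else lam i)"
      unfolding inv_set_def using i iS 2 cf_pq by auto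
    show ?thesis unfolding iv inv_q using 2 cf_pq iS cf_Om[OF i]
      by (cases "arc_col S i"; cases "arc_col S q"; simp add: add_ac)
  next
    case 3
    have n: "lam i \<noteq> lam p" "lam i \<noteq> lam q" using 3 cf_pq cf_nz[OF cf_p] cf_nz[OF cf_q]
      by (auto simp: add_ac)
    then have iS: "i \<notin> S" using cf_Sl by metis
    have iv: "inv_set m lam p S i = (if arc_col S i then lam i + lam p else lam i)"
      unfolding inv_set_def using i iS n by auto
    show ?thesis unfolding iv inv_q using 3 n iS cf_Om[OF i]
      by (cases "arc_col S i"; cases "arc_col S q"; simp add: add_ac)
  qed
qed

lemma adj_Om_keep:
  assumes "x < m" "y < m" "adj m x y" "x \<in> Omega m q S" "x \<notin> S"
  shows "y \<in> Omega m q S"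
proof (cases "y \<in> S")
  case True then show ?thesis unfolding Omega_def by auto
next
  case False
  then show ?thesis using same_col[OF cf_S cf_Se assms(1-3)] assms cf_Om by auto
qed

end

lemma key_nb:
  assumes cf: "conf m lam p q S T" and z: "z < m" "z \<in> Omega m q S" "z \<in> Omega m p T"
    and za: "lam z = lam p"
  shows "\<exists>w<m. adj m z w \<and> lam w \<noteq> lam p \<and> w \<in> Omega m q S \<and> w \<in> Omega m p T"
proof -
  note cf' = conf_sym[OF cf]
  have zT: "z \<notin> T" using cf_Sl[OF cf'] za cf_pq[OF cf] by metis
  have B: "w \<in> Omega m p T" if "w < m" "adj m z w" for w
    using adj_Om_keep[OF cf' z(1) that z(3) zT] .
  have nl: "lam w \<noteq> lam p" if "w < m" "adj m z w" for w
    using cf_adj[OF cf z(1) that] za by simp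
  have nS: "w \<notin> S" if "w < m" "adj m z w" for w
    using nl[OF that] cf_Sl[OF cf] by metis
  have m0: "0 < m" using z by simp
  define w1 where "w1 = Suc z mod m"
  have w1: "w1 < m" "adj m z w1" unfolding w1_def adj_def using m0 by auto
  show ?thesis
  proof (cases "z \<in> S")
    case False
    then have "w1 \<in> Omega m q S" using adj_Om_keep[OF cf z(1) w1 z(2)] by blast
    then show ?thesis using w1 B nl by blast
  next
    case True
    obtain w0 where w0: "w0 < m" "Suc w0 mod m = z" using pred_ex[OF z(1)] by blast
    have w0a: "adj m z w0" using w0 unfolding adj_def by auto
    have c1: "arc_col S w1 = (\<not> arc_col S z)"
      unfolding w1_def using col_next[OF cf_S[OF cf] cf_Se[OF cf] z(1)] True by simp
    have c0: "arc_col S z = arc_col S w0"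
      using col_next[OF cf_S[OF cf] cf_Se[OF cf] w0(1)] w0(2) nS[OF w0(1) w0a] by simp
    show ?thesis
    proof (cases "arc_col S w1 = arc_col S q")
      case False
      then have "w1 \<in> Omega m q S" using cf_Om[OF cf w1(1)] nS[OF w1] by auto
      then show ?thesis using w1 B nl by blast
    next
      case True
      then have "w0 \<in> Omega m q S" using cf_Om[OF cf w0(1)] nS[OF w0(1) w0a] c1 c0 by auto
      then show ?thesis using w0(1) w0a B nl by blast
    qed
  qed
qed


lemma pm_face_mono: "pm_face m F \<Longrightarrow> N \<subseteq> F \<Longrightarrow> pm_face m N"
  unfolding pm_face_def by blast

lemma exists_min_nonface:
  "finite N0 \<Longrightarrow> N0 \<subseteq> {0..<m} \<Longrightarrow> \<not> pm_face m N0 \<Longrightarrow> \<exists>N\<subseteq>N0. pm_min_nonface m N"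
proof (induction "card N0" arbitrary: N0 rule: less_induct)
  case less
  show ?case
  proof (cases "\<forall>x\<in>N0. pm_face m (N0 - {x})")
    case True
    then show ?thesis using less.prems unfolding pm_min_nonface_def by blast
  next
    case False
    then obtain x where x: "x \<in> N0" "\<not> pm_face m (N0 - {x})" by blast
    have "card (N0 - {x}) < card N0" using x less.prems(1) by (meson card_Diff1_less)
    then obtain N where "N \<subseteq> N0 - {x}" "pm_min_nonface m N"
      using less.hyps[of "N0 - {x}"] less.prems x by blast
    then show ?thesis by blast
  qed
qed

definition Gset :: "nat \<Rightarrow> nat \<Rightarrow> wvert set \<Rightarrow> nat set" where
  "Gset p q \<tau> = {k. Old k \<in> \<tau>} \<union> (if P1 \<in> \<tau> \<and> P2 \<in> \<tau> then {p} else {})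
     \<union> (if Q1 \<in> \<tau> \<and> Q2 \<in> \<tau> then {q} else {})"

lemma wv_Old: "Old k \<in> wed_vertices m p q \<longleftrightarrow> k < m \<and> k \<noteq> p \<and> k \<noteq> q"
  unfolding wed_vertices_def by auto

lemma face_G:
  assumes f: "wed_face m p q \<tau>" and pq: "p < m" "q < m" "p \<noteq> q"
  shows "pm_face m (Gset p q \<tau>)"
proof (rule ccontr)
  assume n: "\<not> pm_face m (Gset p q \<tau>)"
  have sub: "\<tau> \<subseteq> wed_vertices m p q" using f unfolding wed_face_def by blast
  have Gs: "Gset p q \<tau> \<subseteq> {0..<m}" using sub pq wv_Old unfolding Gset_def by auto
  then have fin: "finite (Gset p q \<tau>)" using finite_subset by blast
  obtain N where N: "N \<subseteq> Gset p q \<tau>" "pm_min_nonface m N"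
    using exists_min_nonface[OF fin Gs n] by blast
  have pin: "P1 \<in> \<tau> \<and> P2 \<in> \<tau>" if "p \<in> N"
  proof -
    have "p \<in> Gset p q \<tau>" using N that by blast
    moreover have "Old p \<notin> \<tau>" using sub wv_Old by blast
    ultimately show ?thesis using pq(3) unfolding Gset_def by (auto split: if_splits)
  qed
  have qin: "Q1 \<in> \<tau> \<and> Q2 \<in> \<tau>" if "q \<in> N"
  proof -
    have "q \<in> Gset p q \<tau>" using N that by blast
    moreover have "Old q \<notin> \<tau>" using sub wv_Old by blast
    ultimately show ?thesis using pq(3) unfolding Gset_def by (auto split: if_splits)
  qed
  have old: "Old k \<in> \<tau>" if "k \<in> N" "k \<noteq> p" "k \<noteq> q" for k
    using that N(1) unfolding Gset_def by (auto split: if_splits)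
  have "wed_set p q N \<subseteq> \<tau>" unfolding wed_set_def using pin qin old by auto
  then show False using f N(2) unfolding wed_face_def by blast
qed

lemma wed_face_PQ:
  assumes F: "F \<subseteq> {0..<m} - {p, q}" "pm_face m F"
  shows "wed_face m p q (Old ` F \<union> {P1, Q1})"
  unfolding wed_face_def
proof
  show "Old ` F \<union> {P1, Q1} \<subseteq> wed_vertices m p q" using F(1) unfolding wed_vertices_def by auto
  show "\<not> (\<exists>N. pm_min_nonface m N \<and> wed_set p q N \<subseteq> Old ` F \<union> {P1, Q1})"
  proof
    assume "\<exists>N. pm_min_nonface m N \<and> wed_set p q N \<subseteq> Old ` F \<union> {P1, Q1}"
    then obtain N where N: "pm_min_nonface m N" "wed_set p q N \<subseteq> Old ` F \<union> {P1, Q1}" by blast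
    have "p \<notin> N" using N(2) unfolding wed_set_def by auto
    moreover have "q \<notin> N" using N(2) unfolding wed_set_def by auto
    ultimately have "N \<subseteq> F" using N(2) unfolding wed_set_def by auto
    then have "pm_face m N" using pm_face_mono F(2) by blast
    then show False using N(1) unfolding pm_min_nonface_def by blast
  qed
qed



lemma span_two_bit: "vec.span {v, w::bit^'n} \<subseteq> {0, v, w, v + w}"
proof (rule vec.span_minimal)
  show "{v, w} \<subseteq> {0, v, w, v + w}" by auto
  show "vec.subspace {0, v, w, v + w}"
    unfolding vec.subspace_def
  proof (intro conjI ballI allI)
    fix x y assume "x \<in> {0, v, w, v + w}" "y \<in> {0, v, w, v + w}"
    then show "x + y \<in> {0, v, w, v + w}" by (auto simp: add_ac)
  next
    fix c :: bit and x assume "x \<in> {0, v, w, v + w}"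
    then show "c *s x \<in> {0, v, w, v + w}" using bit_cases2[of c] by auto
  qed simp
qed

lemma dep_mem: "u \<in> X \<Longrightarrow> u \<in> vec.span (X - {u}) \<Longrightarrow> vec.dependent X"
  unfolding vec.dependent_def by blast

lemma dep3:
  fixes u v w :: "bit^'n"
  assumes "u = v + w" "u \<noteq> v" "u \<noteq> w"
  shows "vec.dependent {u, v, w}"
proof (rule dep_mem[of u])
  have "v \<in> {u,v,w} - {u}" "w \<in> {u,v,w} - {u}" using assms by auto
  then show "u \<in> vec.span ({u, v, w} - {u})" unfolding assms(1)
    by (intro vec.span_add vec.span_base)
qed simp

lemma dep4:
  fixes u v w t :: "bit^'n"
  assumes "u = v + w + t" "u \<noteq> v" "u \<noteq> w" "u \<noteq> t"
  shows "vec.dependent {u, v, w, t}"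
proof (rule dep_mem[of u])
  have "v \<in> {u,v,w,t} - {u}" "w \<in> {u,v,w,t} - {u}" "t \<in> {u,v,w,t} - {u}" using assms by auto
  then show "u \<in> vec.span ({u, v, w, t} - {u})" unfolding assms(1)
    by (intro vec.span_add vec.span_base)
qed simp

lemma zero3:
  fixes M1 M2 M3 :: "bit^4^2" and v2 w2 d :: "bit^4"
  assumes k: "{x. M1 *v x = 0} = vec.span {v2, w2}"
    and "M2 *v v2 \<noteq> 0" "M2 *v w2 = 0" "M3 *v w2 \<noteq> 0"
    and d: "M1 *v d = 0" "M2 *v d = 0" "M3 *v d = 0"
  shows "d = 0"
proof -
  have "d \<in> {0, v2, w2, v2 + w2}" using d(1) k span_two_bit by blast
  then show ?thesis using assms by (auto simp: matrix_vector_right_distrib)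
qed

lemma char2_eq: "(x::bit^'n) + y + z = 0 \<Longrightarrow> x = y + z"
  by (metis add.assoc add_diff_cancel_right' diff_zero vadd_self)

lemma char2_eq4: "(x::bit^'n) + y + z + t = 0 \<Longrightarrow> x = y + z + t"
  by (metis add.assoc add_diff_cancel_right' diff_zero vadd_self)



lemma ker_zero: "{y. M *v y = 0} = vec.span X \<Longrightarrow> x \<in> X \<Longrightarrow> M *v x = 0"
  using vec.span_base by blast

lemma adj_sym: "adj m x y = adj m y x" unfolding adj_def by auto

lemma pm_face_single: "z < m \<Longrightarrow> pm_face m {z}"
  unfolding pm_face_def by auto

lemma pm_face_adj: "x < m \<Longrightarrow> y < m \<Longrightarrow> adj m x y \<Longrightarrow> pm_face m {x, y}"
  unfolding pm_face_def adj_def by auto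

lemma forward:
  assumes cf: "conf m lam p q S T"
    and rs: "realizable_square m p q lam (inv_set m lam p S) (inv_set m lam q T)"
  shows "Omega m q S \<inter> Omega m p T = {}"
proof (rule ccontr)
  assume "Omega m q S \<inter> Omega m p T \<noteq> {}"
  then obtain z where z: "z \<in> Omega m q S" "z \<in> Omega m p T" by blast
  note cf' = conf_sym[OF cf]
  have zm: "z < m" using cf_Om_lt[OF cf z(1)] .
  have pm: "p < m" and qm: "q < m" and ab: "lam p \<noteq> lam q" using cf_p[OF cf] cf_q[OF cf] cf_pq[OF cf] .
  have pq: "p \<noteq> q" using ab by blast
  obtain Lam where W: "wed_char_map m p q Lam"
    and p1: "proj_dj_equiv m Lam {P2, Q2} (wemb p q P1 Q1) lam"
    and p2: "proj_dj_equiv m Lam {P1, Q2} (wemb p q P2 Q1) (inv_set m lam p S)"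
    and p3: "proj_dj_equiv m Lam {P2, Q1} (wemb p q P1 Q2) (inv_set m lam q T)"
    using rs unfolding realizable_square_def by blast
  obtain M1 where k1: "{x. M1 *v x = 0} = vec.span {Lam P2, Lam Q2}"
    and e1: "\<forall>i<m. M1 *v Lam (wemb p q P1 Q1 i) = lam i"
    using p1 unfolding proj_dj_equiv_def by auto
  obtain M2 where k2: "{x. M2 *v x = 0} = vec.span {Lam P1, Lam Q2}"
    and e2: "\<forall>i<m. M2 *v Lam (wemb p q P2 Q1 i) = inv_set m lam p S i"
    using p2 unfolding proj_dj_equiv_def by auto
  obtain M3 where k3: "{x. M3 *v x = 0} = vec.span {Lam P2, Lam Q1}"
    and e3: "\<forall>i<m. M3 *v Lam (wemb p q P1 Q2 i) = inv_set m lam q T i"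
    using p3 unfolding proj_dj_equiv_def by auto
  have M1p: "M1 *v Lam P1 = lam p" using e1 pm by (auto simp: wemb_def)
  have M1q: "M1 *v Lam Q1 = lam q" using e1 qm pq by (auto simp: wemb_def)
  have M1o: "M1 *v Lam (Old i) = lam i" if "i < m" "i \<noteq> p" "i \<noteq> q" for i
    using e1 that by (auto simp: wemb_def)
  have M2p: "M2 *v Lam P2 = lam p" using e2 pm inv_self[OF cf, of p] by (auto simp: wemb_def)
  have M2q: "M2 *v Lam Q1 = inv_set m lam p S q" using e2 qm pq by (auto simp: wemb_def)
  have M2o: "M2 *v Lam (Old i) = inv_set m lam p S i" if "i < m" "i \<noteq> p" "i \<noteq> q" for i
    using e2 that by (auto simp: wemb_def)
  have M3p: "M3 *v Lam P1 = inv_set m lam q T p" using e3 pm by (auto simp: wemb_def)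
  have M3q: "M3 *v Lam Q2 = lam q" using e3 qm pq inv_self[OF cf', of q] by (auto simp: wemb_def)
  have M3o: "M3 *v Lam (Old i) = inv_set m lam q T i" if "i < m" "i \<noteq> p" "i \<noteq> q" for i
    using e3 that by (auto simp: wemb_def)
  have K: "M1 *v Lam P2 = 0" "M1 *v Lam Q2 = 0" "M2 *v Lam P1 = 0" "M2 *v Lam Q2 = 0"
    "M3 *v Lam P2 = 0" "M3 *v Lam Q1 = 0"
    using ker_zero[OF k1] ker_zero[OF k2] ker_zero[OF k3] by auto
  have anz: "lam p \<noteq> 0" and bnz: "lam q \<noteq> 0" using cf_nz[OF cf pm] cf_nz[OF cf qm] .
  have Z: "d = 0" if "M1 *v d = 0" "M2 *v d = 0" "M3 *v d = 0" for d
    using zero3[OF k1 _ K(4) _ that] M2p M3q anz bnz by simp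
  have pB: "p \<notin> Omega m p T" using cf_qOm[OF cf'] .
  have qA: "q \<notin> Omega m q S" using cf_qOm[OF cf] .
  have bad: "(\<exists>c<m. lam c \<noteq> lam p \<and> lam c \<noteq> lam q \<and> c \<in> Omega m q S \<and> c \<in> Omega m p T) \<or>
    (\<exists>x<m. \<exists>y<m. adj m x y \<and> lam x = lam p \<and> lam y = lam q \<and> x \<in> Omega m q S \<and> x \<in> Omega m p T
        \<and> y \<in> Omega m q S \<and> y \<in> Omega m p T)"
  proof -
    consider "lam z = lam p" | "lam z = lam q" | "lam z \<noteq> lam p" "lam z \<noteq> lam q" by blast
    then show ?thesis
    proof cases
      case 1
      obtain w where w: "w < m" "adj m z w" "lam w \<noteq> lam p" "w \<in> Omega m q S" "w \<in> Omega m p T"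
        using key_nb[OF cf zm z 1] by blast
      show ?thesis using w z zm 1 by (cases "lam w = lam q") blast+
    next
      case 2
      obtain w where w: "w < m" "adj m z w" "lam w \<noteq> lam q" "w \<in> Omega m p T" "w \<in> Omega m q S"
        using key_nb[OF cf' zm z(2) z(1) 2] by blast
      have "adj m w z" using w(2) adj_sym by metis
      then show ?thesis using w z zm 2 by (cases "lam w = lam p") blast+
    qed (use z zm in blast)
  qed
  then show False
  proof
    assume "\<exists>c<m. lam c \<noteq> lam p \<and> lam c \<noteq> lam q \<and> c \<in> Omega m q S \<and> c \<in> Omega m p T"
    then obtain c where c: "c < m" "lam c \<noteq> lam p" "lam c \<noteq> lam q" "c \<in> Omega m q S" "c \<in> Omega m p T"
      by blast
    have cpq: "c \<noteq> p" "c \<noteq> q" using c by auto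
    have lc: "lam c = lam p + lam q" using cf_three[OF cf c(1)] c by blast
    define u where "u = Lam (Old c)"
    have s2: "inv_set m lam p S c + inv_set m lam p S q = lam c + lam q + lam p"
      using inv_sum[OF cf c(1) c(4) c(2)] .
    have s3: "inv_set m lam q T c + inv_set m lam q T p = lam c + lam p + lam q"
      using inv_sum[OF cf' c(1) c(5) c(3)] .
    have "M1 *v (u + Lam P1 + Lam Q1) = 0"
      unfolding u_def matrix_vector_right_distrib M1o[OF c(1) cpq] M1p M1q lc by (simp add: add_ac)
    moreover have "M2 *v (u + Lam P1 + Lam Q1) = 0"
      unfolding u_def matrix_vector_right_distrib M2o[OF c(1) cpq] K M2q
      using s2 lc by (simp add: add_ac)
    moreover have "M3 *v (u + Lam P1 + Lam Q1) = 0"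
      unfolding u_def matrix_vector_right_distrib M3o[OF c(1) cpq] K M3p
      using s3 lc by (simp add: add_ac)
    ultimately have ueq: "u = Lam P1 + Lam Q1" using Z char2_eq by blast
    have "wed_face m p q (Old ` {c} \<union> {P1, Q1})"
      by (rule wed_face_PQ) (use c cpq pm_face_single in auto)
    then have wf: "inj_on Lam (Old ` {c} \<union> {P1, Q1})" "vec.independent (Lam ` (Old ` {c} \<union> {P1, Q1}))"
      using W unfolding wed_char_map_def by blast+
    have "u \<noteq> Lam P1" "u \<noteq> Lam Q1" using wf(1) unfolding u_def inj_on_def by auto
    then have "vec.dependent {u, Lam P1, Lam Q1}" using dep3 ueq by blast
    moreover have "Lam ` (Old ` {c} \<union> {P1, Q1}) = {u, Lam P1, Lam Q1}" unfolding u_def by auto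
    ultimately show False using wf(2) by simp
  next
    assume "\<exists>x<m. \<exists>y<m. adj m x y \<and> lam x = lam p \<and> lam y = lam q \<and> x \<in> Omega m q S \<and> x \<in> Omega m p T
        \<and> y \<in> Omega m q S \<and> y \<in> Omega m p T"
    then obtain x y where xy: "x < m" "y < m" "adj m x y" "lam x = lam p" "lam y = lam q"
      "x \<in> Omega m q S" "x \<in> Omega m p T" "y \<in> Omega m q S" "y \<in> Omega m p T" by blast
    have xpq: "x \<noteq> p" "x \<noteq> q" using xy pB ab by auto
    have ypq: "y \<noteq> p" "y \<noteq> q" using xy qA ab by auto
    have xny: "x \<noteq> y" using xy ab by auto
    define u where "u = Lam (Old x)"
    define v where "v = Lam (Old y)"
    have s2: "inv_set m lam p S y + inv_set m lam p S q = lam y + lam q + lam p"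
      using inv_sum[OF cf xy(2) xy(8)] xy(5) ab by simp
    have s3: "inv_set m lam q T x + inv_set m lam q T p = lam x + lam p + lam q"
      using inv_sum[OF cf' xy(1) xy(7)] xy(4) ab by simp
    have i2: "inv_set m lam p S x = lam x" using inv_self[OF cf xy(4)] .
    have i3: "inv_set m lam q T y = lam y" using inv_self[OF cf' xy(5)] .
    have "M1 *v (u + v + Lam P1 + Lam Q1) = 0"
      unfolding u_def v_def matrix_vector_right_distrib M1o[OF xy(1) xpq] M1o[OF xy(2) ypq] M1p M1q
      xy(4,5) by (simp add: add_ac)
    moreover have "M2 *v (u + v + Lam P1 + Lam Q1) = 0"
      unfolding u_def v_def matrix_vector_right_distrib M2o[OF xy(1) xpq] M2o[OF xy(2) ypq] K M2q i2
      using s2 xy(4,5) by (simp add: add_ac)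
    moreover have "M3 *v (u + v + Lam P1 + Lam Q1) = 0"
      unfolding u_def v_def matrix_vector_right_distrib M3o[OF xy(1) xpq] M3o[OF xy(2) ypq] K M3p i3
      using s3 xy(4,5) by (simp add: add_ac)
    ultimately have ueq: "u = v + Lam P1 + Lam Q1" using Z char2_eq4 by blast
    have "wed_face m p q (Old ` {x, y} \<union> {P1, Q1})"
      by (rule wed_face_PQ) (use xy xpq ypq pm_face_adj in auto)
    then have wf: "inj_on Lam (Old ` {x, y} \<union> {P1, Q1})" "vec.independent (Lam ` (Old ` {x, y} \<union> {P1, Q1}))"
      using W unfolding wed_char_map_def by blast+
    have "u \<noteq> v" "u \<noteq> Lam P1" "u \<noteq> Lam Q1" using wf(1) xny unfolding u_def v_def inj_on_def by auto
    then have "vec.dependent {u, v, Lam P1, Lam Q1}" using dep4 ueq by blast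
    moreover have "Lam ` (Old ` {x, y} \<union> {P1, Q1}) = {u, v, Lam P1, Lam Q1}" unfolding u_def v_def by auto
    ultimately show False using wf(2) by simp
  qed
qed



lemma four_distinct: "(1::4) \<noteq> 2" "(1::4) \<noteq> 3" "(1::4) \<noteq> 4" "(2::4) \<noteq> 3" "(2::4) \<noteq> 4" "(3::4) \<noteq> 4"
  by simp_all

definition uvec :: "nat \<Rightarrow> (nat \<Rightarrow> bit^2) \<Rightarrow> nat \<Rightarrow> nat \<Rightarrow> nat set \<Rightarrow> nat set \<Rightarrow> nat \<Rightarrow> bit^4" where
  "uvec m lam p q S T i = (\<chi> k. if k = 1 then of_bool (lam i \<noteq> lam q)
     else if k = 2 then of_bool ((lam i \<noteq> lam q) \<noteq> (lam i \<noteq> lam p \<and> i \<in> Omega m q S))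
     else if k = 3 then of_bool (lam i \<noteq> lam p)
     else of_bool ((lam i \<noteq> lam p) \<noteq> (lam i \<noteq> lam q \<and> i \<in> Omega m p T)))"

lemma uvec_comp:
  "uvec m lam p q S T i $ 1 = of_bool (lam i \<noteq> lam q)"
  "uvec m lam p q S T i $ 2 = of_bool ((lam i \<noteq> lam q) \<noteq> (lam i \<noteq> lam p \<and> i \<in> Omega m q S))"
  "uvec m lam p q S T i $ 3 = of_bool (lam i \<noteq> lam p)"
  "uvec m lam p q S T i $ 4 = of_bool ((lam i \<noteq> lam p) \<noteq> (lam i \<noteq> lam q \<and> i \<in> Omega m p T))"
  unfolding uvec_def by simp_all

definition LamC :: "nat \<Rightarrow> (nat \<Rightarrow> bit^2) \<Rightarrow> nat \<Rightarrow> nat \<Rightarrow> nat set \<Rightarrow> nat set \<Rightarrow> wvert \<Rightarrow> bit^4" where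
  "LamC m lam p q S T v = (case v of P1 \<Rightarrow> axis 1 1 | P2 \<Rightarrow> axis 2 1 | Q1 \<Rightarrow> axis 3 1 | Q2 \<Rightarrow> axis 4 1
     | Old i \<Rightarrow> uvec m lam p q S T i)"

lemma cov4: "\<And>j::4. j = 1 \<or> j = 2 \<or> j = 3 \<or> j = 4" using exhaust_4 by blast

lemma axis_comp: "axis (k::4) (1::bit) $ j = (if j = k then 1 else 0)"
  by (simp add: axis_def)

context
  fixes m lam p q S T
  assumes cf: "conf m lam p q S T"
begin

abbreviation "LL \<equiv> LamC m lam p q S T"

lemma pq_ne: "p \<noteq> q" using cf_pq[OF cf] by blast

lemma proj1: "proj_dj_equiv m LL {P2, Q2} (wemb p q P1 Q1) lam"
  unfolding proj_dj_equiv_def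
proof (intro exI conjI)
  have anz: "lam p \<noteq> 0" "lam q \<noteq> 0" using cf_nz[OF cf cf_p[OF cf]] cf_nz[OF cf cf_q[OF cf]] .
  show "{x. mkM 1 3 (lam p) (lam q) *v x = 0} = vec.span (LL ` {P2, Q2})"
  proof -
    have "{x. mkM (1::4) 3 (lam p) (lam q) *v x = 0} = vec.span {axis 2 1, axis 4 1}"
      by (rule ker_mkM) (use cov4 anz cf_pq[OF cf] in auto)
    then show ?thesis by (simp add: LamC_def)
  qed
  show "\<forall>i<m. mkM 1 3 (lam p) (lam q) *v LL (wemb p q P1 Q1 i) = lam i"
  proof (intro allI impI)
    fix i assume i: "i < m"
    show "mkM 1 3 (lam p) (lam q) *v LL (wemb p q P1 Q1 i) = lam i"
    proof (cases "i = p \<or> i = q")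
      case True then show ?thesis using pq_ne by (auto simp: wemb_def LamC_def mkM_mult axis_comp)
    next
      case False
      then have w: "wemb p q P1 Q1 i = Old i" by (simp add: wemb_def)
      show ?thesis unfolding w LamC_def using cf_three[OF cf i] cf_pq[OF cf] anz
        by (auto simp: mkM_mult uvec_comp)
    qed
  qed
qed

lemma l1q_props: "inv_set m lam p S q \<noteq> 0" "lam p \<noteq> inv_set m lam p S q"
proof -
  have anz: "lam p \<noteq> 0" "lam q \<noteq> 0" using cf_nz[OF cf cf_p[OF cf]] cf_nz[OF cf cf_q[OF cf]] .
  have "lam q + lam p \<noteq> 0" using bit2_sum_ne cf_pq[OF cf] by metis
  then show "inv_set m lam p S q \<noteq> 0" "lam p \<noteq> inv_set m lam p S q"
    unfolding inv_q[OF cf] using anz cf_pq[OF cf] by auto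
qed

lemma proj2: "proj_dj_equiv m LL {P1, Q2} (wemb p q P2 Q1) (inv_set m lam p S)"
  unfolding proj_dj_equiv_def
proof (intro exI conjI)
  have anz: "lam p \<noteq> 0" "lam q \<noteq> 0" using cf_nz[OF cf cf_p[OF cf]] cf_nz[OF cf cf_q[OF cf]] .
  show "{x. mkM 2 3 (lam p) (inv_set m lam p S q) *v x = 0} = vec.span (LL ` {P1, Q2})"
  proof -
    have "{x. mkM (2::4) 3 (lam p) (inv_set m lam p S q) *v x = 0} = vec.span {axis 1 1, axis 4 1}"
      by (rule ker_mkM) (use cov4 anz l1q_props in auto)
    then show ?thesis by (simp add: LamC_def)
  qed
  show "\<forall>i<m. mkM 2 3 (lam p) (inv_set m lam p S q) *v LL (wemb p q P2 Q1 i) = inv_set m lam p S i"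
  proof (intro allI impI)
    fix i assume i: "i < m"
    show "mkM 2 3 (lam p) (inv_set m lam p S q) *v LL (wemb p q P2 Q1 i) = inv_set m lam p S i"
    proof (cases "i = p \<or> i = q")
      case True then show ?thesis using pq_ne inv_self[OF cf, of p]
        by (auto simp: wemb_def LamC_def mkM_mult axis_comp)
    next
      case False
      then have w: "wemb p q P2 Q1 i = Old i" by (simp add: wemb_def)
      show ?thesis unfolding w LamC_def using inv_val[OF cf i]
        by (simp add: mkM_mult uvec_comp)
    qed
  qed
qed

lemma proj3: "proj_dj_equiv m LL {P2, Q1} (wemb p q P1 Q2) (inv_set m lam q T)"
  unfolding proj_dj_equiv_def
proof (intro exI conjI)
  note cf' = conf_sym[OF cf]
  have anz: "lam p \<noteq> 0" "lam q \<noteq> 0" using cf_nz[OF cf cf_p[OF cf]] cf_nz[OF cf cf_q[OF cf]] .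
  have l2: "inv_set m lam q T p \<noteq> 0" "lam q \<noteq> inv_set m lam q T p"
  proof -
    have "lam p + lam q \<noteq> 0" using bit2_sum_ne cf_pq[OF cf] by metis
    then show "inv_set m lam q T p \<noteq> 0" "lam q \<noteq> inv_set m lam q T p"
      unfolding inv_q[OF cf'] using anz cf_pq[OF cf] by auto
  qed
  show "{x. mkM 1 4 (inv_set m lam q T p) (lam q) *v x = 0} = vec.span (LL ` {P2, Q1})"
  proof -
    have "{x. mkM (1::4) 4 (inv_set m lam q T p) (lam q) *v x = 0} = vec.span {axis 2 1, axis 3 1}"
      by (rule ker_mkM) (use cov4 anz l2 in auto)
    then show ?thesis by (simp add: LamC_def)
  qed
  show "\<forall>i<m. mkM 1 4 (inv_set m lam q T p) (lam q) *v LL (wemb p q P1 Q2 i) = inv_set m lam q T i"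
  proof (intro allI impI)
    fix i assume i: "i < m"
    show "mkM 1 4 (inv_set m lam q T p) (lam q) *v LL (wemb p q P1 Q2 i) = inv_set m lam q T i"
    proof (cases "i = p \<or> i = q")
      case True then show ?thesis using pq_ne inv_self[OF cf', of q]
        by (auto simp: wemb_def LamC_def mkM_mult axis_comp)
    next
      case False
      then have w: "wemb p q P1 Q2 i = Old i" by (simp add: wemb_def)
      show ?thesis unfolding w LamC_def using inv_val[OF cf' i]
        by (simp add: mkM_mult uvec_comp add.commute)
    qed
  qed
qed

end



definition Lset :: "wvert set \<Rightarrow> 4 set" where
  "Lset \<tau> = {l. (l = 1 \<and> P1 \<in> \<tau>) \<or> (l = 2 \<and> P2 \<in> \<tau>) \<or> (l = 3 \<and> Q1 \<in> \<tau>) \<or> (l = 4 \<and> Q2 \<in> \<tau>)}"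

lemma LL_image: "LamC m lam p q S T ` \<tau> = uvec m lam p q S T ` {k. Old k \<in> \<tau>} \<union> (\<lambda>l. axis l 1) ` Lset \<tau>"
proof
  show "LamC m lam p q S T ` \<tau> \<subseteq> uvec m lam p q S T ` {k. Old k \<in> \<tau>} \<union> (\<lambda>l. axis l 1) ` Lset \<tau>"
  proof
    fix y assume "y \<in> LamC m lam p q S T ` \<tau>"
    then obtain v where v: "v \<in> \<tau>" "y = LamC m lam p q S T v" by blast
    show "y \<in> uvec m lam p q S T ` {k. Old k \<in> \<tau>} \<union> (\<lambda>l. axis l 1) ` Lset \<tau>"
      using v by (cases v) (auto simp: LamC_def Lset_def)
  qed
  show "uvec m lam p q S T ` {k. Old k \<in> \<tau>} \<union> (\<lambda>l. axis l 1) ` Lset \<tau> \<subseteq> LamC m lam p q S T ` \<tau>"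
  proof
    fix y assume "y \<in> uvec m lam p q S T ` {k. Old k \<in> \<tau>} \<union> (\<lambda>l. axis l 1) ` Lset \<tau>"
    then consider k where "Old k \<in> \<tau>" "y = uvec m lam p q S T k" | l where "l \<in> Lset \<tau>" "y = axis l 1"
      by blast
    then show "y \<in> LamC m lam p q S T ` \<tau>"
    proof cases
      case 1 then show ?thesis by (intro rev_image_eqI[of "Old k"]) (auto simp: LamC_def)
    next
      case 2 then show ?thesis unfolding Lset_def
        by (auto intro: rev_image_eqI[of P1] rev_image_eqI[of P2] rev_image_eqI[of Q1] rev_image_eqI[of Q2]
            simp: LamC_def)
    qed
  qed
qed

lemma LL_inj:
  assumes "inj_on (uvec m lam p q S T) {k. Old k \<in> \<tau>}"
    and "\<forall>x\<in>{k. Old k \<in> \<tau>}. uvec m lam p q S T x \<notin> (\<lambda>l. axis l 1) ` Lset \<tau>"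
  shows "inj_on (LamC m lam p q S T) \<tau>"
  unfolding inj_on_def
proof (intro ballI impI)
  fix v w assume vw: "v \<in> \<tau>" "w \<in> \<tau>" "LamC m lam p q S T v = LamC m lam p q S T w"
  have a2: "uvec m lam p q S T x \<noteq> axis l 1" if "Old x \<in> \<tau>" "l \<in> Lset \<tau>" for x l
    using assms(2) that by blast
  have a3: "axis l 1 \<noteq> uvec m lam p q S T x" if "Old x \<in> \<tau>" "l \<in> Lset \<tau>" for x l
    using a2 that by metis
  have L: "P1 \<in> \<tau> \<Longrightarrow> 1 \<in> Lset \<tau>" "P2 \<in> \<tau> \<Longrightarrow> 2 \<in> Lset \<tau>" "Q1 \<in> \<tau> \<Longrightarrow> 3 \<in> Lset \<tau>"
    "Q2 \<in> \<tau> \<Longrightarrow> 4 \<in> Lset \<tau>" unfolding Lset_def by auto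
  show "v = w"
    using vw assms(1) a2 a3 L by (cases v; cases w) (auto simp: LamC_def axis_eq_axis inj_on_def)
qed



lemma bit_ob_prod: "(of_bool P :: bit) * of_bool Q = of_bool (P \<and> Q)" by simp
lemma bit_ob_eq: "((of_bool P :: bit) = of_bool Q) \<longleftrightarrow> (P = Q)" by simp
lemma bit_ob_nz: "((of_bool P :: bit) \<noteq> 0) \<longleftrightarrow> P" by simp

lemma det_bool:
  fixes xa xb ya yb xA yA xB yB :: bool
  assumes "\<not> (xa \<and> xb)" "\<not> (ya \<and> yb)" "\<not> (xa \<and> ya)" "\<not> (xb \<and> yb)"
    "\<not> (\<not> xa \<and> \<not> xb \<and> \<not> ya \<and> \<not> yb)"
    "\<not> xa \<and> \<not> ya \<longrightarrow> (xA \<longleftrightarrow> yA)" "xa \<and> \<not> ya \<and> yA \<longrightarrow> xA" "ya \<and> \<not> xa \<and> xA \<longrightarrow> yA"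
    "\<not> xb \<and> \<not> yb \<longrightarrow> (xB \<longleftrightarrow> yB)" "xb \<and> \<not> yb \<and> yB \<longrightarrow> xB" "yb \<and> \<not> xb \<and> xB \<longrightarrow> yB"
    "\<not> (xA \<and> xB)" "\<not> (yA \<and> yB)"
  shows "((\<not> xb) \<and> (\<not> ya)) \<noteq> ((\<not> xa) \<and> (\<not> yb))" 
    "((\<not> xb) \<and> ((\<not> ya) \<noteq> (\<not> yb \<and> yB))) \<noteq> (((\<not> xa) \<noteq> (\<not> xb \<and> xB)) \<and> (\<not> yb))"
    "(((\<not> xb) \<noteq> (\<not> xa \<and> xA)) \<and> (\<not> ya)) \<noteq> ((\<not> xa) \<and> ((\<not> yb) \<noteq> (\<not> ya \<and> yA)))"
    "(((\<not> xb) \<noteq> (\<not> xa \<and> xA)) \<and> ((\<not> ya) \<noteq> (\<not> yb \<and> yB))) \<noteq> (((\<not> xa) \<noteq> (\<not> xb \<and> xB)) \<and> ((\<not> yb) \<noteq> (\<not> ya \<and> yA)))"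
  using assms by argo+

context
  fixes m lam p q S T
  assumes cf: "conf m lam p q S T" and dis: "Omega m q S \<inter> Omega m p T = {}"
begin

abbreviation "UU \<equiv> uvec m lam p q S T"

lemma one_ok:
  assumes x: "x < m" "x \<noteq> p" "x \<noteq> q" and L: "\<not> (1 \<in> L \<and> 2 \<in> L)" "\<not> (3 \<in> L \<and> 4 \<in> L)"
  shows "\<exists>k. k \<notin> L \<and> UU x $ k \<noteq> 0"
proof -
  have c: "lam x = lam p \<or> lam x = lam q \<or> lam x = lam p + lam q" using cf_three[OF cf x(1)] .
  have ab: "lam p \<noteq> lam q" using cf_pq[OF cf] .
  have d: "\<not> (x \<in> Omega m q S \<and> x \<in> Omega m p T)" using dis by blast
  have f: "UU x $ 1 \<noteq> 0 \<or> UU x $ 3 \<noteq> 0" "UU x $ 1 \<noteq> 0 \<or> UU x $ 4 \<noteq> 0"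
    "UU x $ 2 \<noteq> 0 \<or> UU x $ 3 \<noteq> 0" "UU x $ 2 \<noteq> 0 \<or> UU x $ 4 \<noteq> 0"
    unfolding uvec_comp bit_ob_nz using ab d by auto
  show ?thesis using f L by metis
qed

lemma one_p:
  assumes x: "x < m" "adj m x p" "x \<noteq> q"
  shows "UU x $ 3 \<noteq> 0" "UU x $ 4 \<noteq> 0"
proof -
  note cf' = conf_sym[OF cf]
  have "lam x \<noteq> lam p" using cf_adj[OF cf x(1) cf_p[OF cf] x(2)] .
  moreover have "lam x \<noteq> lam q \<Longrightarrow> x \<notin> Omega m p T" using adj_q_notOm[OF cf' x(1) x(2)] by blast
  ultimately show "UU x $ 3 \<noteq> 0" "UU x $ 4 \<noteq> 0" unfolding uvec_comp bit_ob_nz by auto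
qed

lemma one_q:
  assumes x: "x < m" "adj m x q" "x \<noteq> p"
  shows "UU x $ 1 \<noteq> 0" "UU x $ 2 \<noteq> 0"
proof -
  have "lam x \<noteq> lam q" using cf_adj[OF cf x(1) cf_q[OF cf] x(2)] .
  moreover have "lam x \<noteq> lam p \<Longrightarrow> x \<notin> Omega m q S" using adj_q_notOm[OF cf x(1) x(2)] by blast
  ultimately show "UU x $ 1 \<noteq> 0" "UU x $ 2 \<noteq> 0" unfolding uvec_comp bit_ob_nz by auto
qed

lemma two_ok:
  assumes xy: "x < m" "y < m" "adj m x y"
  shows "UU x $ 1 * UU y $ 3 \<noteq> UU x $ 3 * UU y $ 1" "UU x $ 1 * UU y $ 4 \<noteq> UU x $ 4 * UU y $ 1"
    "UU x $ 2 * UU y $ 3 \<noteq> UU x $ 3 * UU y $ 2" "UU x $ 2 * UU y $ 4 \<noteq> UU x $ 4 * UU y $ 2"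
proof -
  note cf' = conf_sym[OF cf]
  have yx: "adj m y x" using xy(3) adj_sym by metis
  have ab: "lam p \<noteq> lam q" using cf_pq[OF cf] .
  have nxy: "lam x \<noteq> lam y" using cf_adj[OF cf xy] .
  have cx: "lam x = lam p \<or> lam x = lam q \<or> lam x = lam p + lam q" using cf_three[OF cf xy(1)] .
  have cy: "lam y = lam p \<or> lam y = lam q \<or> lam y = lam p + lam q" using cf_three[OF cf xy(2)] .
  have h5: "\<not> (lam x \<noteq> lam p \<and> lam x \<noteq> lam q \<and> lam y \<noteq> lam p \<and> lam y \<noteq> lam q)"
    using cx cy nxy by auto
  have h6: "lam x \<noteq> lam p \<and> lam y \<noteq> lam p \<longrightarrow> (x \<in> Omega m q S \<longleftrightarrow> y \<in> Omega m q S)"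
    using adj_Om_eq[OF cf xy] by blast
  have h7: "lam x = lam p \<and> lam y \<noteq> lam p \<and> y \<in> Omega m q S \<longrightarrow> x \<in> Omega m q S"
    using ab_pair[OF cf xy] by blast
  have h8: "lam y = lam p \<and> lam x \<noteq> lam p \<and> x \<in> Omega m q S \<longrightarrow> y \<in> Omega m q S"
    using ab_pair[OF cf xy(2,1) yx] by blast
  have h9: "lam x \<noteq> lam q \<and> lam y \<noteq> lam q \<longrightarrow> (x \<in> Omega m p T \<longleftrightarrow> y \<in> Omega m p T)"
    using adj_Om_eq[OF cf' xy] by blast
  have h10: "lam x = lam q \<and> lam y \<noteq> lam q \<and> y \<in> Omega m p T \<longrightarrow> x \<in> Omega m p T"
    using ab_pair[OF cf' xy] by blast
  have h11: "lam y = lam q \<and> lam x \<noteq> lam q \<and> x \<in> Omega m p T \<longrightarrow> y \<in> Omega m p T"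
    using ab_pair[OF cf' xy(2,1) yx] by blast
  have h12: "\<not> (x \<in> Omega m q S \<and> x \<in> Omega m p T)" "\<not> (y \<in> Omega m q S \<and> y \<in> Omega m p T)"
    using dis by blast+
  have h1: "\<not> (lam x = lam p \<and> lam x = lam q)" "\<not> (lam y = lam p \<and> lam y = lam q)"
    "\<not> (lam x = lam p \<and> lam y = lam p)" "\<not> (lam x = lam q \<and> lam y = lam q)"
    using ab nxy by auto
  note D = det_bool[of "lam x = lam p" "lam x = lam q" "lam y = lam p" "lam y = lam q"
    "x \<in> Omega m q S" "y \<in> Omega m q S" "x \<in> Omega m p T" "y \<in> Omega m p T", OF h1 h5 h6 h7 h8 h9 h10 h11 h12]
  show "UU x $ 1 * UU y $ 3 \<noteq> UU x $ 3 * UU y $ 1" "UU x $ 1 * UU y $ 4 \<noteq> UU x $ 4 * UU y $ 1"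
    "UU x $ 2 * UU y $ 3 \<noteq> UU x $ 3 * UU y $ 2" "UU x $ 2 * UU y $ 4 \<noteq> UU x $ 4 * UU y $ 2"
    unfolding uvec_comp bit_ob_prod bit_ob_eq using D by simp_all
qed

end



lemma charmap:
  assumes cf: "conf m lam p q S T" and dis: "Omega m q S \<inter> Omega m p T = {}"
  shows "wed_char_map m p q (LamC m lam p q S T)"
  unfolding wed_char_map_def
proof (intro allI impI)
  fix \<tau> assume f: "wed_face m p q \<tau>"
  define U where "U = uvec m lam p q S T"
  define Os where "Os = {k. Old k \<in> \<tau>}"
  define L where "L = Lset \<tau>"
  have pm: "p < m" and qm: "q < m" and pq: "p \<noteq> q"
    using cf_p[OF cf] cf_q[OF cf] cf_pq[OF cf] by auto
  have sub: "\<tau> \<subseteq> wed_vertices m p q" using f unfolding wed_face_def by blast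
  have hO: "k < m \<and> k \<noteq> p \<and> k \<noteq> q" if "k \<in> Os" for k
    using that sub wv_Old unfolding Os_def by blast
  obtain i where i: "i < m" "Gset p q \<tau> \<subseteq> {i, Suc i mod m}"
    using face_G[OF f pm qm pq] unfolding pm_face_def by blast
  have OsG: "Os \<subseteq> Gset p q \<tau>" unfolding Os_def Gset_def by auto
  have PG: "1 \<in> L \<and> 2 \<in> L \<Longrightarrow> p \<in> Gset p q \<tau>" unfolding L_def Lset_def Gset_def by auto
  have QG: "3 \<in> L \<and> 4 \<in> L \<Longrightarrow> q \<in> Gset p q \<tau>" unfolding L_def Lset_def Gset_def by auto
  have two: "x = y \<or> adj m x y" if "x \<in> {i, Suc i mod m}" "y \<in> {i, Suc i mod m}" for x y
    using that unfolding adj_def by auto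
  have img: "LamC m lam p q S T ` \<tau> = U ` Os \<union> (\<lambda>l. axis l 1) ` L"
    unfolding U_def Os_def L_def by (rule LL_image)
  have inj: "inj_on (LamC m lam p q S T) \<tau>"
    if "inj_on U Os" "\<forall>x\<in>Os. U x \<notin> (\<lambda>l. axis l 1) ` L"
    using LL_inj[of m lam p q S T \<tau>] that unfolding U_def Os_def L_def by blast
  show "inj_on (LamC m lam p q S T) \<tau> \<and> vec.independent (LamC m lam p q S T ` \<tau>)"
  proof (cases "\<exists>x y. x \<in> Os \<and> y \<in> Os \<and> x \<noteq> y")
    case True
    then obtain x y where xy: "x \<in> Os" "y \<in> Os" "x \<noteq> y" by blast
    have xyG: "x \<in> {i, Suc i mod m}" "y \<in> {i, Suc i mod m}" using xy OsG i by auto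
    have Oeq: "Os = {x, y}"
    proof
      show "Os \<subseteq> {x, y}"
      proof
        fix z assume "z \<in> Os"
        then have "z \<in> {i, Suc i mod m}" using OsG i by auto
        then show "z \<in> {x, y}" using xyG xy(3) by auto
      qed
    qed (use xy in auto)
    have a: "adj m x y" using two[OF xyG] xy(3) by blast
    have nP: "\<not> (1 \<in> L \<and> 2 \<in> L)"
    proof
      assume "1 \<in> L \<and> 2 \<in> L"
      then have "p \<in> {i, Suc i mod m}" using PG i by auto
      then show False using xyG xy hO by auto
    qed
    have nQ: "\<not> (3 \<in> L \<and> 4 \<in> L)"
    proof
      assume "3 \<in> L \<and> 4 \<in> L"
      then have "q \<in> {i, Suc i mod m}" using QG i by auto
      then show False using xyG xy hO by auto
    qed
    obtain k1 where k1: "k1 \<notin> L" "k1 = 1 \<or> k1 = 2" using nP by blast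
    obtain k2 where k2: "k2 \<notin> L" "k2 = 3 \<or> k2 = 4" using nQ by blast
    have det: "U x $ k1 * U y $ k2 \<noteq> U x $ k2 * U y $ k1"
      using two_ok[OF cf dis _ _ a] hO xy k1 k2 unfolding U_def by auto
    note R = indep_ins2[OF det k1(1) k2(1)]
    have "LamC m lam p q S T ` \<tau> = insert (U y) (insert (U x) ((\<lambda>l. axis l 1) ` L))"
      unfolding img Oeq by auto
    moreover have "inj_on U Os" using R unfolding Oeq by auto
    moreover have "\<forall>x\<in>Os. U x \<notin> (\<lambda>l. axis l 1) ` L" using R unfolding Oeq by auto
    ultimately show ?thesis using R inj by simp
  next
    case False
    show ?thesis
    proof (cases "\<exists>x. x \<in> Os")
      case True
      then obtain x where x: "x \<in> Os" by blast
      have Oeq: "Os = {x}" using x False by auto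
      have xG: "x \<in> {i, Suc i mod m}" using x OsG i by auto
      have "\<exists>k. k \<notin> L \<and> U x $ k \<noteq> 0"
      proof (cases "p \<in> Gset p q \<tau>")
        case True
        then have pG: "p \<in> {i, Suc i mod m}" using i by auto
        have a: "adj m x p" using two[OF xG pG] hO[OF x] by blast
        have nQ: "\<not> (3 \<in> L \<and> 4 \<in> L)"
        proof
          assume "3 \<in> L \<and> 4 \<in> L"
          then have "q \<in> {i, Suc i mod m}" using QG i by auto
          then show False using xG pG hO[OF x] pq by auto
        qed
        then show ?thesis using one_p[OF cf dis _ a] hO[OF x] unfolding U_def by metis
      next
        case nP: False
        show ?thesis
        proof (cases "q \<in> Gset p q \<tau>")
          case True
          then have qG: "q \<in> {i, Suc i mod m}" using i by auto
          have a: "adj m x q" using two[OF xG qG] hO[OF x] by blast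
          have "\<not> (1 \<in> L \<and> 2 \<in> L)" using nP PG by blast
          then show ?thesis using one_q[OF cf dis _ a] hO[OF x] unfolding U_def by metis
        next
          case False
          then show ?thesis using one_ok[OF cf dis, of x L] hO[OF x] nP PG QG unfolding U_def by blast
        qed
      qed
      then obtain k where k: "k \<notin> L" "U x $ k \<noteq> 0" by blast
      note R = indep_ins1[OF k(2) k(1)]
      have "LamC m lam p q S T ` \<tau> = insert (U x) ((\<lambda>l. axis l 1) ` L)"
        unfolding img Oeq by auto
      moreover have "inj_on U Os" unfolding Oeq by auto
      moreover have "\<forall>x\<in>Os. U x \<notin> (\<lambda>l. axis l 1) ` L" using R unfolding Oeq by auto
      ultimately show ?thesis using R inj by simp
    next
      case False
      then have Oeq: "Os = {}" by auto
      have "LamC m lam p q S T ` \<tau> = (\<lambda>l. axis l 1) ` L" unfolding img Oeq by auto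
      then show ?thesis using inj indep_axis[of L] unfolding Oeq by simp
    qed
  qed
qed


theorem proposition3:
  fixes m p q :: nat and lam :: "nat \<Rightarrow> bit^2" and S T :: "nat set"
  assumes "m \<ge> 3"
    and "z2_char_map m lam"
    and "eset m lam p S" and "eset m lam q T"
    and "S \<noteq> {}" and "T \<noteq> {}"
    and "lam p \<noteq> lam q"
  shows "realizable_square m p q lam (inv_set m lam p S) (inv_set m lam q T)
           \<longleftrightarrow> Omega m q S \<inter> Omega m p T = {}"
proof -
  have cf: "conf m lam p q S T" using assms unfolding conf_def by auto
  show ?thesis
  proof
    assume "realizable_square m p q lam (inv_set m lam p S) (inv_set m lam q T)"
    then show "Omega m q S \<inter> Omega m p T = {}" using forward[OF cf] by blast
  next
    assume dis: "Omega m q S \<inter> Omega m p T = {}"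
    show "realizable_square m p q lam (inv_set m lam p S) (inv_set m lam q T)"
      unfolding realizable_square_def
      using charmap[OF cf dis] proj1[OF cf] proj2[OF cf] proj3[OF cf] by blast
  qed
qed

end
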